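(* Let $\Lambda$ be diagonal with entries in $[0,1]$, $W$ row-stochastic, $\beta\in[0,1]^n$, and set $W^{(1)}=[\mathbf 1-\beta]W$, $W^{(2)}=[\beta]W$. Then, with $\bar A_d:=\begin{pmatrix}0 & I\\ \Lambda W^{(2)} & \Lambda W^{(1)}\end{pmatrix}$, one has $\rho(\bar A_d)\ge\rho(\Lambda W)$.
   Context: $[v]$ denotes the diagonal matrix with diagonal $v$; $\mathbf 1$ is the all-ones vector; $\rho$ is spectral radius. *)

theory Defs
  imports "Jordan_Normal_Form.Spectral_Radius"
begin

definition diag_of_vec :: "'a::zero vec \<Rightarrow> 'a mat" where
  "diag_of_vec v = mat (dim_vec v) (dim_vec v) (\<lambda>(i,j). if i = j then v $ i else 0)"

definition row_stochastic :: "real mat \<Rightarrow> bool" where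
  "row_stochastic W \<longleftrightarrow>
     (\<forall>i<dim_row W. \<forall>j<dim_col W. W $$ (i,j) \<ge> 0) \<and>
     (\<forall>i<dim_row W. (\<Sum>j<dim_col W. W $$ (i,j)) = 1)"

definition rho :: "real mat \<Rightarrow> real" where
  "rho A = spectral_radius (map_mat complex_of_real A)"

end

theory Submission
  imports Defs
begin

lemma mv_entry: assumes "A \<in> carrier_mat m m" "x \<in> carrier_vec m" "i < m"
  shows "(A *\<^sub>v x) $ i = (\<Sum>j<m. A $$ (i,j) * x $ j)"
  using assms by (auto simp: mult_mat_vec_def scalar_prod_def atLeast0LessThan)

lemma mm_entry: assumes "A \<in> carrier_mat m m" "B \<in> carrier_mat m m" "i < m" "j < m"
  shows "(A * B) $$ (i,j) = (\<Sum>l<m. A $$ (i,l) * B $$ (l,j))"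
  using assms by (auto simp: scalar_prod_def atLeast0LessThan)

lemma pow_nonneg: fixes D :: "real mat"
  assumes D: "D \<in> carrier_mat m m" and nn: "\<forall>i<m. \<forall>j<m. D $$ (i,j) \<ge> 0"
  shows "\<forall>i<m. \<forall>j<m. (D ^\<^sub>m k) $$ (i,j) \<ge> 0"
proof (induction k)
  case 0
  then show ?case using D by auto
next
  case (Suc k)
  show ?case
  proof (intro allI impI)
    fix i j assume ij: "i < m" "j < m"
    have "(D ^\<^sub>m Suc k) $$ (i,j) = (\<Sum>l<m. (D ^\<^sub>m k) $$ (i,l) * D $$ (l,j))"
      using mm_entry[OF pow_carrier_mat[OF D] D ij] by simp
    also have "\<dots> \<ge> 0" using Suc nn ij by (intro sum_nonneg mult_nonneg_nonneg) auto
    finally show "(D ^\<^sub>m Suc k) $$ (i,j) \<ge> 0" .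
  qed
qed

lemma pow_growth: fixes D :: "real mat"
  assumes D: "D \<in> carrier_mat m m" and nn: "\<forall>i<m. \<forall>j<m. D $$ (i,j) \<ge> 0"
  and x: "x \<in> carrier_vec m" and xnn: "\<forall>i<m. x $ i \<ge> 0" and q: "q \<ge> 0"
  and Dx: "\<forall>i<m. (D *\<^sub>v x) $ i \<ge> q * x $ i"
  shows "\<forall>i<m. (D ^\<^sub>m k *\<^sub>v x) $ i \<ge> q ^ k * x $ i"
proof (induction k)
  case 0
  then show ?case using D x by auto
next
  case (Suc k)
  show ?case
  proof (intro allI impI)
    fix i assume i: "i < m"
    have Dk: "D ^\<^sub>m k \<in> carrier_mat m m" using D by auto
    have nk: "\<forall>i<m. \<forall>j<m. (D ^\<^sub>m k) $$ (i,j) \<ge> 0" by (rule pow_nonneg[OF D nn])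
    have "(D ^\<^sub>m Suc k *\<^sub>v x) = D ^\<^sub>m k *\<^sub>v (D *\<^sub>v x)"
      using assoc_mult_mat_vec[OF Dk D x] by simp
    hence eq: "(D ^\<^sub>m Suc k *\<^sub>v x) $ i = (\<Sum>j<m. (D ^\<^sub>m k) $$ (i,j) * (D *\<^sub>v x) $ j)"
      using mv_entry[OF Dk _ i, of "D *\<^sub>v x"] D x by auto
    have "q ^ Suc k * x $ i = q * (q ^ k * x $ i)" by simp
    also have "\<dots> \<le> q * (D ^\<^sub>m k *\<^sub>v x) $ i"
      using Suc i q by (intro mult_left_mono) auto
    also have "q * (D ^\<^sub>m k *\<^sub>v x) $ i = (\<Sum>j<m. (D ^\<^sub>m k) $$ (i,j) * (q * x $ j))"
      using mv_entry[OF Dk x i] by (simp add: sum_distrib_left algebra_simps)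
    also have "\<dots> \<le> (\<Sum>j<m. (D ^\<^sub>m k) $$ (i,j) * (D *\<^sub>v x) $ j)"
      using Dx nk i by (intro sum_mono mult_left_mono) auto
    also have "\<dots> = (D ^\<^sub>m Suc k *\<^sub>v x) $ i" using eq by simp
    finally show "(D ^\<^sub>m Suc k *\<^sub>v x) $ i \<ge> q ^ Suc k * x $ i" .
  qed
qed

lemma rho_nonneg: assumes "A \<in> carrier_mat m m" "m > 0" shows "rho A \<ge> 0"
proof -
  have "map_mat complex_of_real A \<in> carrier_mat m m" using assms by auto
  from spectral_radius_mem_max(1)[OF this assms(2)] show ?thesis unfolding rho_def by auto
qed

lemma sr_lower:
  fixes A :: "real mat" and x :: "real vec"
  assumes A: "A \<in> carrier_mat m m" and nn: "\<forall>i<m. \<forall>j<m. A $$ (i,j) \<ge> 0"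
  and x: "x \<in> carrier_vec m" and xnn: "\<forall>i<m. x $ i \<ge> 0" and i0: "i0 < m" "x $ i0 > 0"
  and r: "r > 0" and Ax: "\<forall>i<m. (A *\<^sub>v x) $ i \<ge> r * x $ i"
  shows "rho A \<ge> r"
proof (rule ccontr)
  assume "\<not> rho A \<ge> r"
  hence lt: "rho A < r" by simp
  have m: "m > 0" using i0 by auto
  have r0: "rho A \<ge> 0" using rho_nonneg[OF A m] .
  define s where "s = (rho A + r) / 2"
  have s: "s > 0" "rho A < s" "s < r" using lt r0 unfolding s_def by auto
  define D where "D = (1/s) \<cdot>\<^sub>m A"
  define Ac where "Ac = map_mat complex_of_real A"
  define C where "C = map_mat complex_of_real D"
  have D: "D \<in> carrier_mat m m" using A unfolding D_def by auto
  have Ac: "Ac \<in> carrier_mat m m" using A unfolding Ac_def by auto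
  have C: "C \<in> carrier_mat m m" using D unfolding C_def by auto
  have sC: "spectral_radius C < 1"
  proof -
    from spectral_radius_mem_max(1)[OF C m] obtain \<mu> where
      mu: "\<mu> \<in> spectrum C" and eq: "spectral_radius C = cmod \<mu>" by auto
    from mu obtain w where ev: "eigenvector C w \<mu>" unfolding spectrum_def eigenvalue_def by auto
    hence w: "w \<in> carrier_vec m" "w \<noteq> 0\<^sub>v m" "C *\<^sub>v w = \<mu> \<cdot>\<^sub>v w"
      using C unfolding eigenvector_def by auto
    have "Ac *\<^sub>v w = (complex_of_real s * \<mu>) \<cdot>\<^sub>v w"
    proof (rule eq_vecI)
      fix i assume "i < dim_vec ((complex_of_real s * \<mu>) \<cdot>\<^sub>v w)"
      hence i: "i < m" using w by auto
      have "(Ac *\<^sub>v w) $ i = (\<Sum>j<m. Ac $$ (i,j) * w $ j)" by (rule mv_entry[OF Ac w(1) i])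
      also have "\<dots> = complex_of_real s * (\<Sum>j<m. C $$ (i,j) * w $ j)"
        unfolding sum_distrib_left
        by (rule sum.cong, insert i A s, auto simp: Ac_def C_def D_def)
      also have "(\<Sum>j<m. C $$ (i,j) * w $ j) = (C *\<^sub>v w) $ i" by (rule mv_entry[OF C w(1) i, symmetric])
      also have "\<dots> = \<mu> * w $ i" using w i by auto
      finally show "(Ac *\<^sub>v w) $ i = ((complex_of_real s * \<mu>) \<cdot>\<^sub>v w) $ i" using i w by auto
    qed (insert Ac w, auto)
    hence "eigenvector Ac w (complex_of_real s * \<mu>)" using w Ac unfolding eigenvector_def by auto
    hence "cmod (complex_of_real s * \<mu>) \<in> norm ` spectrum Ac" unfolding spectrum_def eigenvalue_def by auto
    from spectral_radius_mem_max(2)[OF Ac m this]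
    have "s * cmod \<mu> \<le> rho A" using s unfolding rho_def Ac_def by (simp add: norm_mult)
    with s have "s * cmod \<mu> < s * 1" by linarith
    hence "cmod \<mu> < 1" using s by auto
    with eq show ?thesis by simp
  qed
  from spectral_radius_jnf_norm_bound_less_1_upper_triangular[OF C sC]
  obtain c where bnd: "\<And>k. norm_bound (C ^\<^sub>m k) c" by auto
  have Dk_bnd: "\<bar>(D ^\<^sub>m k) $$ (i,j)\<bar> \<le> c" if "i < m" "j < m" for i j k
  proof -
    have "C ^\<^sub>m k = map_mat complex_of_real (D ^\<^sub>m k)"
      unfolding C_def using of_real_hom.mat_hom_pow[OF D, of k] by metis
    with bnd[of k] that D show ?thesis unfolding norm_bound_def by auto
  qed
  define q where "q = r / s"
  have q: "q > 1" using s unfolding q_def by auto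
  have Dnn: "\<forall>i<m. \<forall>j<m. D $$ (i,j) \<ge> 0" using nn s A unfolding D_def by auto
  have Dx: "\<forall>i<m. (D *\<^sub>v x) $ i \<ge> q * x $ i"
  proof (intro allI impI)
    fix i assume i: "i < m"
    have "(D *\<^sub>v x) $ i = (A *\<^sub>v x) $ i / s"
      using mv_entry[OF D x i] mv_entry[OF A x i] A i
      unfolding D_def by (auto simp: sum_divide_distrib)
    also have "\<dots> \<ge> r * x $ i / s" using Ax i s by (auto simp: divide_right_mono)
    finally show "(D *\<^sub>v x) $ i \<ge> q * x $ i" unfolding q_def by simp
  qed
  define S where "S = (\<Sum>j<m. x $ j)"
  have grow: "q ^ k * x $ i0 \<le> c * S" for k
  proof -
    have "q ^ k * x $ i0 \<le> (D ^\<^sub>m k *\<^sub>v x) $ i0"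
      using pow_growth[OF D Dnn x xnn _ Dx] q i0 by auto
    also have "\<dots> = (\<Sum>j<m. (D ^\<^sub>m k) $$ (i0,j) * x $ j)"
      using mv_entry[OF pow_carrier_mat[OF D] x i0(1)] by simp
    also have "\<dots> \<le> (\<Sum>j<m. c * x $ j)"
    proof (rule sum_mono)
      fix j assume "j \<in> {..<m}"
      hence j: "j < m" by auto
      have "(D ^\<^sub>m k) $$ (i0,j) * x $ j \<le> \<bar>(D ^\<^sub>m k) $$ (i0,j)\<bar> * x $ j"
        using xnn j by (intro mult_right_mono) auto
      also have "\<dots> \<le> c * x $ j" using Dk_bnd[OF i0(1) j] xnn j by (intro mult_right_mono) auto
      finally show "(D ^\<^sub>m k) $$ (i0,j) * x $ j \<le> c * x $ j" .
    qed
    also have "\<dots> = c * S" unfolding S_def by (simp add: sum_distrib_left)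
    finally show ?thesis .
  qed
  obtain k where "c * S / x $ i0 < q ^ k" using real_arch_pow[OF q] by blast
  hence "c * S < q ^ k * x $ i0" using i0 by (simp add: divide_less_eq)
  with grow[of k] show False by simp
qed


lemma split_sum: "(\<Sum>j<n+n. f j) = (\<Sum>j<n. f j) + (\<Sum>j<n. (f (j+n)::real))" for n :: nat
proof -
  have eq: "{..<n+n} = {..<n} \<union> {n..<n+n}" by auto
  have "(\<Sum>j<n+n. f j) = (\<Sum>j<n. f j) + (\<Sum>j\<in>{n..<n+n}. f j)"
    by (simp only: eq, rule sum.union_disjoint, auto)
  also have "(\<Sum>j\<in>{n..<n+n}. f j) = (\<Sum>j<n. f (j+n))"
    using sum.shift_bounds_nat_ivl[of f 0 n n] by (simp add: atLeast0LessThan)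
  finally show ?thesis .
qed

lemma diag_mult_entry: fixes Lam X :: "real mat"
  assumes Lam: "Lam \<in> carrier_mat n n" and d: "diagonal_mat Lam" and X: "X \<in> carrier_mat n n"
  and i: "i < n" and j: "j < n"
  shows "(Lam * X) $$ (i,j) = Lam $$ (i,i) * X $$ (i,j)"
proof -
  have "(Lam * X) $$ (i,j) = (\<Sum>l<n. Lam $$ (i,l) * X $$ (l,j))" by (rule mm_entry[OF Lam X i j])
  also have "\<dots> = (\<Sum>l<n. if l = i then Lam $$ (i,i) * X $$ (i,j) else 0)"
    by (rule sum.cong, insert d Lam i, auto simp: diagonal_mat_def)
  also have "\<dots> = Lam $$ (i,i) * X $$ (i,j)" using i by simp
  finally show ?thesis .
qed

lemma diag_vec_entry: fixes v :: "real vec" and X :: "real mat"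
  assumes v: "v \<in> carrier_vec n" and X: "X \<in> carrier_mat n n"
  and i: "i < n" and j: "j < n"
  shows "(diag_of_vec v * X) $$ (i,j) = v $ i * X $$ (i,j)"
proof -
  have c: "diag_of_vec v \<in> carrier_mat n n" using v by (auto simp: diag_of_vec_def)
  have d: "diagonal_mat (diag_of_vec v)" using v by (auto simp: diag_of_vec_def diagonal_mat_def)
  show ?thesis using diag_mult_entry[OF c d X i j] v i by (simp add: diag_of_vec_def)
qed

theorem corollary2:
  fixes n :: nat and Lam W :: "real mat" and \<beta> :: "real vec"
  assumes Lam: "Lam \<in> carrier_mat n n" and Lam_diag: "diagonal_mat Lam"
    and Lam_range: "\<forall>i<n. 0 \<le> Lam $$ (i,i) \<and> Lam $$ (i,i) \<le> 1"
    and W: "W \<in> carrier_mat n n" and W_stoch: "row_stochastic W"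
    and \<beta>: "\<beta> \<in> carrier_vec n" and \<beta>_range: "\<forall>i<n. 0 \<le> \<beta> $ i \<and> \<beta> $ i \<le> 1"
  shows "rho (four_block_mat (0\<^sub>m n n) (1\<^sub>m n)
                (Lam * (diag_of_vec \<beta> * W))
                (Lam * (diag_of_vec (vec n (\<lambda>i. 1 - \<beta> $ i)) * W)))
         \<ge> rho (Lam * W)"
proof -
  define P where "P = Lam * (diag_of_vec \<beta> * W)"
  define Q where "Q = Lam * (diag_of_vec (vec n (\<lambda>i. 1 - \<beta> $ i)) * W)"
  define M where "M = Lam * W"
  define B where "B = four_block_mat (0\<^sub>m n n) (1\<^sub>m n) P Q"
  define l where "l i = Lam $$ (i,i)" for i
  have Wnn: "\<And>i j. i < n \<Longrightarrow> j < n \<Longrightarrow> W $$ (i,j) \<ge> 0"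
    using W_stoch W unfolding row_stochastic_def by auto
  have Wsum: "\<And>i. i < n \<Longrightarrow> (\<Sum>j<n. W $$ (i,j)) = 1"
    using W_stoch W unfolding row_stochastic_def by auto
  have Pc: "P \<in> carrier_mat n n" using Lam W \<beta> unfolding P_def by (auto simp: diag_of_vec_def)
  have Qc: "Q \<in> carrier_mat n n" using Lam W \<beta> unfolding Q_def by (auto simp: diag_of_vec_def)
  have Mc: "M \<in> carrier_mat n n" using Lam W unfolding M_def by auto
  have Bc: "B \<in> carrier_mat (n+n) (n+n)" using Pc Qc unfolding B_def by auto
  have Me: "\<And>i j. i < n \<Longrightarrow> j < n \<Longrightarrow> M $$ (i,j) = l i * W $$ (i,j)"
    unfolding M_def l_def by (rule diag_mult_entry[OF Lam Lam_diag W])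
  have Pe: "\<And>i j. i < n \<Longrightarrow> j < n \<Longrightarrow> P $$ (i,j) = l i * (\<beta> $ i * W $$ (i,j))"
  proof -
    fix i j assume ij: "i < n" "j < n"
    have "diag_of_vec \<beta> * W \<in> carrier_mat n n" using W \<beta> by (auto simp: diag_of_vec_def)
    from diag_mult_entry[OF Lam Lam_diag this ij] diag_vec_entry[OF \<beta> W ij]
    show "P $$ (i,j) = l i * (\<beta> $ i * W $$ (i,j))" unfolding P_def l_def by simp
  qed
  have Qe: "\<And>i j. i < n \<Longrightarrow> j < n \<Longrightarrow> Q $$ (i,j) = l i * ((1 - \<beta> $ i) * W $$ (i,j))"
  proof -
    fix i j assume ij: "i < n" "j < n"
    have v: "vec n (\<lambda>i. 1 - \<beta> $ i) \<in> carrier_vec n" by auto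
    have "diag_of_vec (vec n (\<lambda>i. 1 - \<beta> $ i)) * W \<in> carrier_mat n n" using W by (auto simp: diag_of_vec_def)
    from diag_mult_entry[OF Lam Lam_diag this ij] diag_vec_entry[OF v W ij] ij
    show "Q $$ (i,j) = l i * ((1 - \<beta> $ i) * W $$ (i,j))" unfolding Q_def l_def by simp
  qed
  have lr: "\<And>i. i < n \<Longrightarrow> 0 \<le> l i \<and> l i \<le> 1" using Lam_range unfolding l_def by auto
  show ?thesis
  proof (cases "n = 0")
    case True
    have "B = M" by (rule eq_matI, insert Bc Mc True, auto)
    thus ?thesis unfolding B_def P_def Q_def M_def by simp
  next
    case False
    hence n: "n > 0" by auto
    define Mx where "Mx = map_mat complex_of_real M"
    have Mxc: "Mx \<in> carrier_mat n n" using Mc unfolding Mx_def by auto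
    from spectral_radius_mem_max(1)[OF Mxc n] obtain ev where
      ev: "ev \<in> spectrum Mx" and req: "rho M = cmod ev" unfolding rho_def Mx_def by auto
    from ev obtain v where "eigenvector Mx v ev" unfolding spectrum_def eigenvalue_def by auto
    hence v: "v \<in> carrier_vec n" "v \<noteq> 0\<^sub>v n" "Mx *\<^sub>v v = ev \<cdot>\<^sub>v v"
      using Mxc unfolding eigenvector_def by auto
    define r where "r = rho M"
    have Bnn: "\<forall>i<n+n. \<forall>j<n+n. B $$ (i,j) \<ge> 0"
    proof (intro allI impI)
      fix i j assume ij: "i < n+n" "j < n+n"
      show "B $$ (i,j) \<ge> 0"
      proof (cases "i < n")
        case True then show ?thesis using ij Pc Qc unfolding B_def by auto
      next
        case False
        hence i': "i - n < n" using ij by auto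
        show ?thesis
        proof (cases "j < n")
          case True
          then show ?thesis using ij Pc Qc False Pe[OF i' True] lr[OF i'] Wnn[OF i' True] \<beta>_range i'
            unfolding B_def by auto
        next
          case False2: False
          hence j': "j - n < n" using ij by auto
          then show ?thesis using ij Pc Qc False False2 Qe[OF i' j'] lr[OF i'] Wnn[OF i' j'] \<beta>_range i'
            unfolding B_def by auto
        qed
      qed
    qed
    show ?thesis
    proof (cases "r = 0")
      case True
      have "rho B \<ge> 0" using rho_nonneg[OF Bc] n by auto
      thus ?thesis using True unfolding r_def B_def P_def Q_def M_def by simp
    next
      case False
      hence r: "r > 0" unfolding r_def req by auto
      define y where "y = vec n (\<lambda>i. cmod (v $ i))"
      have yc: "y \<in> carrier_vec n" unfolding y_def by auto
      have ynn: "\<And>i. i < n \<Longrightarrow> y $ i \<ge> 0" unfolding y_def by auto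
      have key1: "\<And>i. i < n \<Longrightarrow> r * y $ i \<le> (\<Sum>j<n. M $$ (i,j) * y $ j)"
      proof -
        fix i assume i: "i < n"
        have "r * y $ i = cmod ((ev \<cdot>\<^sub>v v) $ i)" using i v unfolding r_def req y_def by (simp add: norm_mult)
        also have "\<dots> = cmod ((Mx *\<^sub>v v) $ i)" using v by simp
        also have "(Mx *\<^sub>v v) $ i = (\<Sum>j<n. Mx $$ (i,j) * v $ j)" by (rule mv_entry[OF Mxc v(1) i])
        also have "cmod \<dots> \<le> (\<Sum>j<n. cmod (Mx $$ (i,j) * v $ j))" by (rule norm_sum)
        also have "\<dots> = (\<Sum>j<n. M $$ (i,j) * y $ j)"
          by (rule sum.cong, insert i Mc Me Wnn lr, auto simp: Mx_def y_def norm_mult)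
        finally show "r * y $ i \<le> (\<Sum>j<n. M $$ (i,j) * y $ j)" .
      qed
      define mx where "mx = Max ((\<lambda>i. y $ i) ` {..<n})"
      have "mx \<in> (\<lambda>i. y $ i) ` {..<n}" unfolding mx_def using n by (intro Max_in) auto
      then obtain i0 where i0: "i0 < n" "y $ i0 = mx" by auto
      have ymax: "\<And>j. j < n \<Longrightarrow> y $ j \<le> y $ i0" using i0 unfolding mx_def by auto
      obtain j0 where j0: "j0 < n" "v $ j0 \<noteq> 0"
      proof (rule ccontr)
        assume "\<not> thesis"
        with that have "\<forall>j<n. v $ j = 0" by auto
        hence "v = 0\<^sub>v n" using v by (intro eq_vecI) auto
        with v show False by auto
      qed
      have yi0: "y $ i0 > 0" using ymax[OF j0(1)] j0 i0 unfolding y_def by auto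
      have r1: "r \<le> 1"
      proof -
        have "r * y $ i0 \<le> (\<Sum>j<n. M $$ (i0,j) * y $ j)" by (rule key1[OF i0(1)])
        also have "\<dots> \<le> (\<Sum>j<n. l i0 * W $$ (i0,j) * y $ i0)"
          using Me[OF i0(1)] lr[OF i0(1)] Wnn[OF i0(1)] ymax
          by (intro sum_mono) (auto intro!: mult_left_mono)
        also have "\<dots> = l i0 * y $ i0" using Wsum[OF i0(1)]
          by (simp add: sum_distrib_left[symmetric] sum_distrib_right[symmetric] algebra_simps)
        also have "\<dots> \<le> 1 * y $ i0" using lr[OF i0(1)] yi0 by (intro mult_right_mono) auto
        finally show ?thesis using yi0 by simp
      qed
      define x where "x = y @\<^sub>v (r \<cdot>\<^sub>v y)"
      have xc: "x \<in> carrier_vec (n+n)" unfolding x_def using yc by auto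
      have xe: "\<And>i. i < n+n \<Longrightarrow> x $ i = (if i < n then y $ i else r * y $ (i - n))"
        unfolding x_def using yc by auto
      have xnn: "\<forall>i<n+n. x $ i \<ge> 0" using xe ynn r by auto
      have Bx: "\<forall>i<n+n. (B *\<^sub>v x) $ i \<ge> r * x $ i"
      proof (intro allI impI)
        fix i assume i: "i < n+n"
        have "(B *\<^sub>v x) $ i = (\<Sum>j<n+n. B $$ (i,j) * x $ j)" by (rule mv_entry[OF Bc xc i])
        also have "\<dots> = (\<Sum>j<n. B $$ (i,j) * x $ j) + (\<Sum>j<n. B $$ (i,j+n) * x $ (j+n))"
          by (rule split_sum)
        finally have sp: "(B *\<^sub>v x) $ i = (\<Sum>j<n. B $$ (i,j) * x $ j) + (\<Sum>j<n. B $$ (i,j+n) * x $ (j+n))" .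
        show "(B *\<^sub>v x) $ i \<ge> r * x $ i"
        proof (cases "i < n")
          case True
          have "(\<Sum>j<n. B $$ (i,j) * x $ j) = 0"
            using True Pc Qc unfolding B_def by (intro sum.neutral) auto
          moreover have "(\<Sum>j<n. B $$ (i,j+n) * x $ (j+n)) = (\<Sum>j<n. if j = i then r * y $ i else 0)"
            by (rule sum.cong, insert True Pc Qc xe, auto simp: B_def)
          ultimately show ?thesis using sp True xe i by simp
        next
          case False
          define i' where "i' = i - n"
          have i': "i' < n" using i False unfolding i'_def by auto
          have e1: "(\<Sum>j<n. B $$ (i,j) * x $ j) = (\<Sum>j<n. l i' * (\<beta> $ i' * W $$ (i',j)) * y $ j)"
            by (rule sum.cong, insert False i Pc Qc xe Pe[OF i'], auto simp: B_def i'_def)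
          have e2: "(\<Sum>j<n. B $$ (i,j+n) * x $ (j+n)) = (\<Sum>j<n. l i' * ((1 - \<beta> $ i') * W $$ (i',j)) * (r * y $ j))"
            by (rule sum.cong, insert False i Pc Qc xe Qe[OF i'], auto simp: B_def i'_def)
          have "r * x $ i = r * (r * y $ i')" using xe i False unfolding i'_def by simp
          also have "\<dots> \<le> r * (\<Sum>j<n. M $$ (i',j) * y $ j)"
            using key1[OF i'] r by (intro mult_left_mono) auto
          also have "\<dots> = (\<Sum>j<n. r * (l i' * (\<beta> $ i' * W $$ (i',j)) * y $ j)) +
                         (\<Sum>j<n. l i' * ((1 - \<beta> $ i') * W $$ (i',j)) * (r * y $ j))"
            unfolding sum_distrib_left sum.distrib[symmetric]
            by (rule sum.cong, insert Me[OF i'], auto simp: algebra_simps)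
          also have "(\<Sum>j<n. r * (l i' * (\<beta> $ i' * W $$ (i',j)) * y $ j)) \<le>
                     (\<Sum>j<n. l i' * (\<beta> $ i' * W $$ (i',j)) * y $ j)"
          proof (rule sum_mono)
            fix j assume "j \<in> {..<n}"
            hence j: "j < n" by auto
            have "0 \<le> l i' * (\<beta> $ i' * W $$ (i',j)) * y $ j"
              using lr[OF i'] \<beta>_range i' Wnn[OF i' j] ynn[OF j] by auto
            thus "r * (l i' * (\<beta> $ i' * W $$ (i',j)) * y $ j) \<le> l i' * (\<beta> $ i' * W $$ (i',j)) * y $ j"
              using r1 r by (intro mult_left_le_one_le) auto
          qed
          finally show ?thesis using sp e1 e2 by simp
        qed
      qed
      have "rho B \<ge> r"
        by (rule sr_lower[OF Bc Bnn xc xnn _ _ r Bx, of i0], insert i0 xe yi0, auto)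
      thus ?thesis unfolding r_def B_def P_def Q_def M_def .
    qed
  qed
qed
end
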